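(* Let $\{a_k\}_{k\ge0}$ with $\operatorname{Im}a_k>0$ be arbitrary and put $b_k:=\overline{a_{k-1}}$ for $k\ge1$; let $\{\Phi_k\}_{k\in\mathbb Z}$ be the associated system. Then for every integer $n\ge0$ and all real $x\ne t$, $$\sum_{k=-n}^{n-1}\overline{\Phi_k(x)}\,\Phi_k(t)=\frac{1}{t-x}\,\sin\Bigg(\int_x^t\sum_{k=0}^{n-1}\frac{2\operatorname{Im}a_k}{(u-\operatorname{Re}a_k)^2+(\operatorname{Im}a_k)^2}\,du\Bigg).$$
   Context: For $\mathbf a=\{a_k\}_{k\ge0}$ with $\operatorname{Im}a_k>0$: $\chi_k^+:=\frac{|1+a_k^2|}{1+a_k^2}$ (take $1$ if $1+a_k^2=0$), $B_0^+(z):=1$, $B_n^+(z):=\prod_{k=0}^{n-1}\chi_k^+\frac{z-a_k}{z-\overline{a_k}}$ ($n\ge1$), $\Phi_n^+(z):=\frac{\sqrt{\operatorname{Im}a_n}}{z-\overline{a_n}}B_n^+(z)$ ($n\ge0$). For $\mathbf b=\{b_k\}_{k\ge1}$ with $\operatorname{Im}b_k<0$: $\chi_k^-:=\frac{|1+b_k^2|}{1+b_k^2}$ (take $1$ if $1+b_k^2=0$), $B_1^-(z):=1$, $B_n^-(z):=\prod_{k=1}^{n-1}\chi_k^-\frac{z-b_k}{z-\overline{b_k}}$ ($n\ge2$), $\Phi_n^-(z):=\frac{\sqrt{-\operatorname{Im}b_n}}{z-\overline{b_n}}B_n^-(z)$ ($n\ge1$). Finally $\Phi_n:=\Phi_n^+$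 for $n=0,1,2,\dots$ and $\Phi_n:=\Phi_{-n}^-$ for $n=-1,-2,\dots$. *)

theory Defs
  imports "HOL-Analysis.Analysis"
begin

definition chi :: "complex \<Rightarrow> complex" where
  "chi c = (if 1 + c^2 = 0 then 1 else complex_of_real (cmod (1 + c^2)) / (1 + c^2))"

definition Bplus :: "(nat \<Rightarrow> complex) \<Rightarrow> nat \<Rightarrow> complex \<Rightarrow> complex" where
  "Bplus a n z = (\<Prod>k<n. chi (a k) * ((z - a k) / (z - cnj (a k))))"

definition Phiplus :: "(nat \<Rightarrow> complex) \<Rightarrow> nat \<Rightarrow> complex \<Rightarrow> complex" where
  "Phiplus a n z = complex_of_real (sqrt (Im (a n))) / (z - cnj (a n)) * Bplus a n z"

definition Bminus :: "(nat \<Rightarrow> complex) \<Rightarrow> nat \<Rightarrow> complex \<Rightarrow> complex" where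
  "Bminus b n z = (\<Prod>k\<in>{1..<n}. chi (b k) * ((z - b k) / (z - cnj (b k))))"

definition Phiminus :: "(nat \<Rightarrow> complex) \<Rightarrow> nat \<Rightarrow> complex \<Rightarrow> complex" where
  "Phiminus b n z = complex_of_real (sqrt (- Im (b n))) / (z - cnj (b n)) * Bminus b n z"

definition Phi :: "(nat \<Rightarrow> complex) \<Rightarrow> (nat \<Rightarrow> complex) \<Rightarrow> int \<Rightarrow> complex \<Rightarrow> complex" where
  "Phi a b n z = (if n \<ge> 0 then Phiplus a (nat n) z else Phiminus b (nat (- n)) z)"

end

theory Submission imports Defs begin

lemma chi_norm: "cnj (chi c) * chi c = 1"
proof (cases "1 + c^2 = 0")
  case True then show ?thesis by (simp add: chi_def)
next
  case False
  have nz: "1 + (cnj c)^2 \<noteq> 0" using False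
    by (metis complex_cnj_add complex_cnj_one complex_cnj_power complex_cnj_zero_iff)
  have "cnj (chi c) * chi c = complex_of_real ((cmod (1+c^2))^2) / ((1+c^2) * cnj (1+c^2))"
    using False by (simp add: chi_def power2_eq_square mult.commute)
  also have "\<dots> = 1" using False nz by (simp only: complex_norm_square) simp
  finally show ?thesis .
qed

lemma chi_cnj: "chi (cnj c) = cnj (chi c)"
proof -
  have e: "1 + (cnj c)^2 = cnj (1 + c^2)" by simp
  show ?thesis unfolding chi_def e by (simp add: complex_cnj_divide del: complex_cnj_add)
qed

lemma factor_cis:
  fixes u :: real and a :: complex
  assumes "Im a > 0"
  shows "(of_real u - a) / (of_real u - cnj a) = - cis (2 * arctan ((u - Re a) / Im a))"
proof -
  define s where "s = Im a"
  define r where "r = Re a"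
  define v where "v = (u - r) / s"
  have s: "s > 0" using assms s_def by simp
  have uv: "u = r + s * v" using s v_def by simp
  have q: "sqrt (1 + v^2) ^ 2 = 1 + v^2" by simp
  have c: "cos (2 * arctan v) = (1 - v^2) / (1 + v^2)"
    unfolding cos_double cos_arctan sin_arctan by (simp add: power_divide q diff_divide_distrib)
  have sn: "sin (2 * arctan v) = 2 * v / (1 + v^2)"
    unfolding sin_double cos_arctan sin_arctan using q by (simp add: power2_eq_square)
  have pos: "1 + v^2 > 0" by (simp add: add_pos_nonneg)
  have nz: "of_real u - cnj a \<noteq> 0" using s by (auto simp: complex_eq_iff s_def)
  have a: "a = Complex r s" by (simp add: r_def s_def)
  define C where "C = cos (2 * arctan v)"
  define S where "S = sin (2 * arctan v)"
  have pnz: "1 + v^2 \<noteq> 0" using pos by linarith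
  have e1: "v + v * C = S" unfolding C_def S_def c sn using pnz by (simp add: field_simps)
  have vs: "v * S = 2 * v\<^sup>2 / (1 + v\<^sup>2)" by (simp add: S_def sn power2_eq_square)
  have "C + v * S = ((1 - v\<^sup>2) + 2 * v\<^sup>2) / (1 + v\<^sup>2)" unfolding vs C_def c
    by (simp only: add_divide_distrib[symmetric])
  also have "\<dots> = 1" using pnz by simp
  finally have e2: "C + v * S = 1" .
  have "of_real u - a = - cis (2 * arctan v) * (of_real u - cnj a)"
    unfolding a uv complex_eq_iff
    apply (simp add: cis.ctr C_def[symmetric] S_def[symmetric])
    using arg_cong[OF e1, of "\<lambda>z. s*z"] arg_cong[OF e2, of "\<lambda>z. s*z"]
    by (simp add: algebra_simps)
  then have "(of_real u - a) / (of_real u - cnj a) = - cis (2 * arctan v)" using nz by (simp add: divide_eq_eq)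
  then show ?thesis by (simp add: v_def r_def s_def)
qed

lemma Bminus_eq:
  assumes hb: "\<And>k. k \<ge> 1 \<Longrightarrow> b k = cnj (a (k - 1))"
  shows "Bminus b (Suc n) (of_real z) = cnj (Bplus a n (of_real z))"
proof (induction n)
  case 0 then show ?case by (simp add: Bminus_def Bplus_def)
next
  case (Suc n)
  have "Bminus b (Suc (Suc n)) (of_real z) = Bminus b (Suc n) (of_real z) * (chi (b (Suc n)) * ((of_real z - b (Suc n)) / (of_real z - cnj (b (Suc n)))))"
    by (simp add: Bminus_def)
  also have "\<dots> = cnj (Bplus a n (of_real z)) * cnj (chi (a n) * ((of_real z - a n) / (of_real z - cnj (a n))))"
    using Suc hb[of "Suc n"] by (simp add: chi_cnj complex_cnj_divide)
  also have "\<dots> = cnj (Bplus a (Suc n) (of_real z))" by (simp add: Bplus_def)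
  finally show ?case .
qed

lemma Phiminus_eq:
  assumes hb: "\<And>k. k \<ge> 1 \<Longrightarrow> b k = cnj (a (k - 1))"
  shows "Phiminus b (Suc n) (of_real z) = cnj (Phiplus a n (of_real z))"
  using Bminus_eq[of b a, OF hb, of n z] hb[of "Suc n"]
  by (simp add: Phiminus_def Phiplus_def complex_cnj_divide)

definition G :: "(nat \<Rightarrow> complex) \<Rightarrow> nat \<Rightarrow> real \<Rightarrow> real" where
  "G a n u = (\<Sum>k<n. 2 * arctan ((u - Re (a k)) / Im (a k)))"

lemma w_eq:
  assumes ha: "\<And>k. Im (a k) > 0"
  shows "cnj (Bplus a n (of_real x)) * Bplus a n (of_real t) = cis (G a n t - G a n x)"
proof (induction n)
  case 0 then show ?case by (simp add: Bplus_def G_def)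
next
  case (Suc n)
  define c where "c = chi (a n)"
  define qx where "qx = (of_real x - a n) / (of_real x - cnj (a n))"
  define qt where "qt = (of_real t - a n) / (of_real t - cnj (a n))"
  have "cnj (Bplus a (Suc n) (of_real x)) * Bplus a (Suc n) (of_real t)
      = (cnj (Bplus a n (of_real x)) * Bplus a n (of_real t)) * (cnj c * c) * (cnj qx * qt)"
    by (simp add: Bplus_def c_def qx_def qt_def)
  also have "\<dots> = cis (G a n t - G a n x) * (cnj qx * qt)" using Suc chi_norm c_def by simp
  also have "cnj qx * qt = cis (2 * arctan ((t - Re (a n)) / Im (a n)) - 2 * arctan ((x - Re (a n)) / Im (a n)))"
    unfolding qx_def qt_def factor_cis[OF ha] by (simp add: cis_cnj cis_mult)
  also have "cis (G a n t - G a n x) * \<dots> = cis (G a (Suc n) t - G a (Suc n) x)"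
    by (simp add: cis_mult G_def algebra_simps)
  finally show ?case .
qed


lemma key_id:
  fixes x t :: real and a :: complex
  assumes "Im a > 0" "x \<noteq> t"
  shows "of_real (Im a) / ((of_real x - a) * (of_real t - cnj a))
    = (1 - cnj ((of_real x - a) / (of_real x - cnj a)) * ((of_real t - a) / (of_real t - cnj a))) / (2 * \<i> * of_real (x - t))"
proof -
  have n1: "of_real x - a \<noteq> 0" "of_real t - cnj a \<noteq> 0" "of_real x - cnj a \<noteq> 0"
    using assms by (auto simp: complex_eq_iff)
  have n2: "complex_of_real (x - t) \<noteq> 0" using assms by simp
  have d: "a - cnj a = 2 * \<i> * of_real (Im a)" by (simp add: complex_eq_iff)
  have gen: "\<And>P Q R S :: complex. P \<noteq> 0 \<Longrightarrow> Q \<noteq> 0 \<Longrightarrow> 1 - (R/P)*(S/Q) = (P*Q - R*S)/(P*Q)"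
    by (simp add: field_simps)
  have "(1 - cnj ((of_real x - a) / (of_real x - cnj a)) * ((of_real t - a) / (of_real t - cnj a)))
      = 1 - ((of_real x - cnj a) / (of_real x - a)) * ((of_real t - a) / (of_real t - cnj a))"
    by (simp add: complex_cnj_divide)
  also have "\<dots> = ((of_real x - a) * (of_real t - cnj a) - (of_real x - cnj a) * (of_real t - a)) / ((of_real x - a) * (of_real t - cnj a))"
    by (rule gen) (use n1 in auto)
  also have "(of_real x - a) * (of_real t - cnj a) - (of_real x - cnj a) * (of_real t - a) = (a - cnj a) * of_real (x - t)"
    by (simp add: algebra_simps)
  finally have X: "(1 - cnj ((of_real x - a) / (of_real x - cnj a)) * ((of_real t - a) / (of_real t - cnj a)))
     = (a - cnj a) * of_real (x - t) / ((of_real x - a) * (of_real t - cnj a))" .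
  have gen2: "\<And>s D X :: complex. X \<noteq> 0 \<Longrightarrow> s / D = (2 * \<i> * s * X / D) / (2 * \<i> * X)"
    by (case_tac "D = 0") (simp_all add: field_simps)
  show ?thesis unfolding X d by (rule gen2[OF n2])
qed

lemma tele:
  assumes ha: "\<And>k. Im (a k) > 0" and hxt: "x \<noteq> t"
  shows "(\<Sum>k<n. cnj (Phiplus a k (of_real x)) * Phiplus a k (of_real t))
     = (1 - cnj (Bplus a n (of_real x)) * Bplus a n (of_real t)) / (2 * \<i> * of_real (x - t))"
proof (induction n)
  case 0 then show ?case by (simp add: Bplus_def)
next
  case (Suc n)
  define w where "w = cnj (Bplus a n (of_real x)) * Bplus a n (of_real t)"
  define q where "q = cnj ((of_real x - a n) / (of_real x - cnj (a n))) * ((of_real t - a n) / (of_real t - cnj (a n)))"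
  have ws: "cnj (Bplus a (Suc n) (of_real x)) * Bplus a (Suc n) (of_real t) = w * q"
  proof -
    have "cnj (Bplus a (Suc n) (of_real x)) * Bplus a (Suc n) (of_real t) = w * (cnj (chi (a n)) * chi (a n)) * q"
      by (simp add: Bplus_def w_def q_def)
    then show ?thesis using chi_norm by simp
  qed
  have sq: "cnj (complex_of_real (sqrt (Im (a n)))) * complex_of_real (sqrt (Im (a n))) = of_real (Im (a n))"
    using ha[of n] by (simp flip: of_real_mult)
  have Tn: "cnj (Phiplus a n (of_real x)) * Phiplus a n (of_real t) = of_real (Im (a n)) / ((of_real x - a n) * (of_real t - cnj (a n))) * w"
  proof -
    have "cnj (Phiplus a n (of_real x)) * Phiplus a n (of_real t)
       = (cnj (complex_of_real (sqrt (Im (a n)))) * complex_of_real (sqrt (Im (a n)))) / ((of_real x - a n) * (of_real t - cnj (a n))) * w"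
      by (simp add: Phiplus_def w_def complex_cnj_divide)
    then show ?thesis unfolding sq .
  qed
  have gen: "\<And>D w q :: complex. (1-w)/D + (1-q)/D*w = (1 - w*q)/D"
    by (case_tac "D = 0") (simp_all add: field_simps)
  show ?case
    unfolding sum.lessThan_Suc Suc ws Tn key_id[OF ha hxt] w_def[symmetric] q_def[symmetric]
    by (rule gen)
qed

lemma int_sum_split:
  "(\<Sum>k\<in>{- int n .. int n - 1}. f k) = (\<Sum>k<n. f (int k) + f (- int k - 1))"
proof (induction n)
  case 0 then show ?case by simp
next
  case (Suc n)
  have e: "{- int (Suc n) .. int (Suc n) - 1} = insert (- int n - 1) (insert (int n) {- int n .. int n - 1})"
    by auto
  show ?case unfolding e using Suc by (simp add: sum.distrib algebra_simps)
qed


lemma G_deriv: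
  assumes ha: "\<And>k. Im (a k) > 0"
  shows "(G a n has_real_derivative (\<Sum>k<n. 2 * Im (a k) / ((u - Re (a k))^2 + (Im (a k))^2))) (at u)"
proof (induction n)
  case 0 then show ?case by (simp add: G_def[abs_def])
next
  case (Suc n)
  define r where "r = Re (a n)"
  define s where "s = Im (a n)"
  have s: "s > 0" using ha s_def by simp
  have d: "((\<lambda>u. 2 * arctan ((u - r) / s)) has_real_derivative 2 * (inverse (1 + ((u - r) / s)^2) * (1 / s))) (at u)"
    using s by (auto intro!: derivative_eq_intros DERIV_arctan[THEN DERIV_chain2])
  have pos: "(u - r)^2 + s^2 > 0" using s by (simp add: add_nonneg_pos)
  have e: "2 * (inverse (1 + ((u - r) / s)^2) * (1 / s)) = 2 * s / ((u - r)^2 + s^2)"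
    using s pos by (simp add: field_simps power2_eq_square)
  have "G a (Suc n) = (\<lambda>u. G a n u + 2 * arctan ((u - r) / s))"
    by (simp add: G_def[abs_def] r_def s_def)
  then show ?case using DERIV_add[OF Suc d] unfolding e by (simp add: r_def s_def)
qed

lemma integral_G:
  assumes ha: "\<And>k. Im (a k) > 0"
  shows "(LBINT u=x..t. (\<Sum>k<n. 2 * Im (a k) / ((u - Re (a k))^2 + (Im (a k))^2))) = G a n t - G a n x"
proof (rule interval_integral_FTC_finite)
  have pos: "\<And>u k. (u - Re (a k))^2 + (Im (a k))^2 \<noteq> 0"
    using ha by (metis add_nonneg_pos less_numeral_extra(3) zero_less_power2 zero_le_power2)
  show "continuous_on {min x t..max x t} (\<lambda>u. \<Sum>k<n. 2 * Im (a k) / ((u - Re (a k))^2 + (Im (a k))^2))"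
  proof -
    have nz: "\<And>k. Im (a k) \<noteq> 0" using ha by (metis less_irrefl)
    show ?thesis by (intro continuous_intros) (auto simp: pos nz)
  qed
  fix u
  show "(G a n has_vector_derivative (\<Sum>k<n. 2 * Im (a k) / ((u - Re (a k))^2 + (Im (a k))^2))) (at u within {min x t..max x t})"
    using G_deriv[of a, OF ha, where n=n and u=u] 
    by (simp add: has_real_derivative_iff_has_vector_derivative[symmetric] has_field_derivative_at_within)
qed

lemma sum_conj_cis:
  fixes x t \<theta> :: real
  assumes "x \<noteq> t"
  shows "(1 - cis \<theta>) / (2 * \<i> * of_real (x - t)) + cnj ((1 - cis \<theta>) / (2 * \<i> * of_real (x - t)))
     = of_real (1 / (t - x) * sin \<theta>)"
proof -
  have n: "complex_of_real (x - t) \<noteq> 0" using assms by simp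
  have c: "cnj ((1 - cis \<theta>) / (2 * \<i> * of_real (x - t))) = - ((1 - cis (-\<theta>)) / (2 * \<i> * of_real (x - t)))"
    by (simp add: complex_cnj_divide cis_cnj)
  have "(1 - cis \<theta>) / (2 * \<i> * of_real (x - t)) + cnj ((1 - cis \<theta>) / (2 * \<i> * of_real (x - t)))
      = (cis (-\<theta>) - cis \<theta>) / (2 * \<i> * of_real (x - t))"
    unfolding c by (simp add: diff_divide_distrib)
  also have "cis (-\<theta>) - cis \<theta> = - 2 * \<i> * of_real (sin \<theta>)"
    by (simp add: complex_eq_iff)
  also have "- 2 * \<i> * of_real (sin \<theta>) / (2 * \<i> * of_real (x - t)) = of_real (1 / (t - x) * sin \<theta>)"
    using n assms by (simp add: field_simps)
  finally show ?thesis .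
qed

theorem mainTheorem5:
  fixes a b :: "nat \<Rightarrow> complex" and n :: nat and x t :: real
  assumes ha: "\<And>k. Im (a k) > 0"
    and hb: "\<And>k. k \<ge> 1 \<Longrightarrow> b k = cnj (a (k - 1))"
    and hxt: "x \<noteq> t"
  shows "(\<Sum>k\<in>{- int n .. int n - 1}. cnj (Phi a b k (complex_of_real x)) * Phi a b k (complex_of_real t))
    = complex_of_real (1 / (t - x) * sin (LBINT u=x..t.
        (\<Sum>k<n. 2 * Im (a k) / ((u - Re (a k))^2 + (Im (a k))^2))))"
proof -
  define T where "T k = cnj (Phiplus a k (of_real x)) * Phiplus a k (of_real t)" for k
  have p1: "Phi a b (int k) z = Phiplus a k z" for k z by (simp add: Phi_def)
  have p2: "Phi a b (- int k - 1) z = Phiminus b (Suc k) z" for k z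
    by (simp add: Phi_def nat_add_distrib)
  have "(\<Sum>k\<in>{- int n .. int n - 1}. cnj (Phi a b k (complex_of_real x)) * Phi a b k (complex_of_real t))
      = (\<Sum>k<n. T k + cnj (T k))"
    unfolding int_sum_split p1 p2 T_def by (simp add: Phiminus_eq[of b a, OF hb] mult.commute)
  also have "\<dots> = (\<Sum>k<n. T k) + cnj (\<Sum>k<n. T k)" by (simp add: sum.distrib)
  also have "(\<Sum>k<n. T k) = (1 - cis (G a n t - G a n x)) / (2 * \<i> * of_real (x - t))"
    unfolding T_def tele[OF ha hxt] w_eq[OF ha] ..
  also have "(1 - cis (G a n t - G a n x)) / (2 * \<i> * of_real (x - t)) + cnj \<dots>
     = of_real (1 / (t - x) * sin (G a n t - G a n x))" by (rule sum_conj_cis[OF hxt])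
  finally show ?thesis unfolding integral_G[OF ha] .
qed

end
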